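(* There exist a dynamical system $(X,T)$ which is non-proximal, not totally transitive and transitive compact, and a point $x_0\in X$ such that $\omega_{\mathcal{N}_T}(x_0)\neq\omega_T(x)$ for all $x\in X$.
   Context: A dynamical system $(X,T)$: $X$ is a compact metric space (metric $d$) with more than one point and without isolated points, $T:X\to X$ a continuous surjection. $(X,T)$ is proximal if $\liminf_{n\to\infty}d(T^nx,T^ny)=0$ for all $x,y\in X$. "Opene" means open and nonempty. $N_T(U,V)=\{n\in\mathbb{Z}_+:U\cap T^{-n}V\neq\varnothing\}$. $(X,T)$ is transitive if $N_T(U,V)\neq\varnothing$ for all opene $U,V$; totally transitive if $(X,T^k)$ is transitive for every $k\in\mathbb{N}$. $\mathcal{N}_T$ is the family of subsets of $\mathbb{Z}_+$ containing some $N_T(U,V)$ with $U,V$ opene; $\omega_{\mathcal{N}_T}(x)=\bigcap_{F\in\mathcal{N}_T}\overline{\{T^ix:i\in F\}}$; transitive compact means $\omega_{\mathcal{N}_T}(x)\neq\varnothing$ for all $x$. $\omega_T(x)=\bigcap_{n\ge1}\overline{\{T^kx:k\ge n\}}$. *)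

theory Defs
  imports "HOL-Analysis.Analysis" "HOL-Library.Liminf_Limsup"
begin

definition dyn_sys :: "'a set \<Rightarrow> ('a \<Rightarrow> 'a \<Rightarrow> real) \<Rightarrow> ('a \<Rightarrow> 'a) \<Rightarrow> bool" where
  "dyn_sys X d T \<longleftrightarrow>
     Metric_space X d \<and>
     compact_space (Metric_space.mtopology X d) \<and>
     (\<exists>x\<in>X. \<exists>y\<in>X. x \<noteq> y) \<and>
     (\<forall>x\<in>X. \<not> openin (Metric_space.mtopology X d) {x}) \<and>
     continuous_map (Metric_space.mtopology X d) (Metric_space.mtopology X d) T \<and>
     T ` X = X"

definition proximal :: "'a set \<Rightarrow> ('a \<Rightarrow> 'a \<Rightarrow> real) \<Rightarrow> ('a \<Rightarrow> 'a) \<Rightarrow> bool" where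
  "proximal X d T \<longleftrightarrow>
     (\<forall>x\<in>X. \<forall>y\<in>X. liminf (\<lambda>n. ereal (d ((T ^^ n) x) ((T ^^ n) y))) = 0)"

definition opene :: "'a set \<Rightarrow> ('a \<Rightarrow> 'a \<Rightarrow> real) \<Rightarrow> 'a set \<Rightarrow> bool" where
  "opene X d U \<longleftrightarrow> openin (Metric_space.mtopology X d) U \<and> U \<noteq> {}"

definition hitting_times :: "('a \<Rightarrow> 'a) \<Rightarrow> 'a set \<Rightarrow> 'a set \<Rightarrow> nat set" where
  "hitting_times T U V = {n. \<exists>x\<in>U. (T ^^ n) x \<in> V}"

definition transitive_sys :: "'a set \<Rightarrow> ('a \<Rightarrow> 'a \<Rightarrow> real) \<Rightarrow> ('a \<Rightarrow> 'a) \<Rightarrow> bool" where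
  "transitive_sys X d T \<longleftrightarrow>
     (\<forall>U V. opene X d U \<and> opene X d V \<longrightarrow> hitting_times T U V \<noteq> {})"

definition totally_transitive :: "'a set \<Rightarrow> ('a \<Rightarrow> 'a \<Rightarrow> real) \<Rightarrow> ('a \<Rightarrow> 'a) \<Rightarrow> bool" where
  "totally_transitive X d T \<longleftrightarrow> (\<forall>k::nat. k \<ge> 1 \<longrightarrow> transitive_sys X d (T ^^ k))"

definition hitting_family :: "'a set \<Rightarrow> ('a \<Rightarrow> 'a \<Rightarrow> real) \<Rightarrow> ('a \<Rightarrow> 'a) \<Rightarrow> nat set set" where
  "hitting_family X d T =
     {F. \<exists>U V. opene X d U \<and> opene X d V \<and> hitting_times T U V \<subseteq> F}"

definition omega_NT :: "'a set \<Rightarrow> ('a \<Rightarrow> 'a \<Rightarrow> real) \<Rightarrow> ('a \<Rightarrow> 'a) \<Rightarrow> 'a \<Rightarrow> 'a set" where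
  "omega_NT X d T x =
     X \<inter> (\<Inter>F\<in>hitting_family X d T.
            Metric_space.mtopology X d closure_of ((\<lambda>i. (T ^^ i) x) ` F))"

definition transitive_compact :: "'a set \<Rightarrow> ('a \<Rightarrow> 'a \<Rightarrow> real) \<Rightarrow> ('a \<Rightarrow> 'a) \<Rightarrow> bool" where
  "transitive_compact X d T \<longleftrightarrow> (\<forall>x\<in>X. omega_NT X d T x \<noteq> {})"

definition omega_T :: "'a set \<Rightarrow> ('a \<Rightarrow> 'a \<Rightarrow> real) \<Rightarrow> ('a \<Rightarrow> 'a) \<Rightarrow> 'a \<Rightarrow> 'a set" where
  "omega_T X d T x =
     X \<inter> (\<Inter>n\<in>{1..}. Metric_space.mtopology X d closure_of ((\<lambda>k. (T ^^ k) x) ` {n..}))"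

end

theory Submission
  imports Defs
begin


definition chg :: "(nat \<Rightarrow> bool) \<Rightarrow> nat \<Rightarrow> bool" where
  "chg x n \<longleftrightarrow> x n \<noteq> x (Suc n)"
definition good :: "nat set \<Rightarrow> bool" where
  "good C \<longleftrightarrow> (\<forall>i k. card (C \<inter> {i..<i+k*k}) \<le> k)"
definition SS :: "(nat \<Rightarrow> bool) set" where
  "SS = {x. (\<forall>i j. chg x i \<longrightarrow> chg x j \<longrightarrow> even (i+j)) \<and> good {n. chg x n}}"
definition sh :: "(nat \<Rightarrow> bool) \<Rightarrow> (nat \<Rightarrow> bool)" where
  "sh x = (\<lambda>n. x (Suc n))"
definition DD :: "(nat \<Rightarrow> bool) \<Rightarrow> (nat \<Rightarrow> bool) \<Rightarrow> real" where
  "DD x y = (if x = y then 0 else (1/2)^(LEAST n. x n \<noteq> y n))"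
definition agree :: "(nat \<Rightarrow> bool) \<Rightarrow> (nat \<Rightarrow> bool) \<Rightarrow> nat \<Rightarrow> bool" where
  "agree x y L \<longleftrightarrow> (\<forall>k<L. x k = y k)"

lemma half_pow_le_iff: "((1/2::real)^n \<le> (1/2)^L) = (L \<le> n)"
  by (simp add: power_decreasing_iff)

lemma half_pow_less_iff: "((1/2::real)^n < (1/2)^L) = (L < n)"
  by (simp add: power_strict_decreasing_iff)

lemma DD_le_iff: "DD x y \<le> (1/2)^L \<longleftrightarrow> agree x y L"
proof (cases "x = y")
  case True then show ?thesis by (simp add: DD_def agree_def)
next
  case False
  then obtain m where m: "x m \<noteq> y m" by auto
  define n where "n = (LEAST n. x n \<noteq> y n)"
  have n1: "x n \<noteq> y n" unfolding n_def by (rule LeastI[of _ m]) (rule m)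
  have n2: "\<And>k. k < n \<Longrightarrow> x k = y k" unfolding n_def using not_less_Least by blast
  have "agree x y L \<longleftrightarrow> L \<le> n"
    unfolding agree_def using n1 n2 by (metis not_le order_less_le_trans)
  moreover have "DD x y = (1/2)^n" unfolding DD_def n_def using False by simp
  ultimately show ?thesis by (simp add: half_pow_le_iff)
qed

lemma DD_less_iff: "DD x y < (1/2)^L \<longleftrightarrow> agree x y (Suc L)"
proof (cases "x = y")
  case True then show ?thesis by (simp add: DD_def agree_def)
next
  case False
  then obtain m where m: "x m \<noteq> y m" by auto
  define n where "n = (LEAST n. x n \<noteq> y n)"
  have n1: "x n \<noteq> y n" unfolding n_def by (rule LeastI[of _ m]) (rule m)
  have n2: "\<And>k. k < n \<Longrightarrow> x k = y k" unfolding n_def using not_less_Least by blast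
  have "agree x y (Suc L) \<longleftrightarrow> L < n"
    unfolding agree_def using n1 n2 by (metis not_le less_Suc_eq_le order_less_le_trans)
  moreover have "DD x y = (1/2)^n" unfolding DD_def n_def using False by simp
  ultimately show ?thesis by (simp add: half_pow_less_iff)
qed

lemma DD_form: "DD x y = 0 \<or> (\<exists>n. DD x y = (1/2)^n)"
  by (auto simp: DD_def)

lemma DD_nonneg: "0 \<le> DD x y" by (simp add: DD_def)
lemma DD_commute: "DD x y = DD y x"
  unfolding DD_def by (auto simp: eq_commute)

lemma DD_zero: "DD x y = 0 \<longleftrightarrow> x = y" by (simp add: DD_def)

lemma agree_trans: "agree x y L \<Longrightarrow> agree y z L \<Longrightarrow> agree x z L"
  by (simp add: agree_def)

lemma DD_ultra: "DD x z \<le> max (DD x y) (DD y z)"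
proof -
  consider "max (DD x y) (DD y z) = 0" | n where "max (DD x y) (DD y z) = (1/2)^n"
    by (metis DD_form max_def)
  then show ?thesis
  proof cases
    case 1
    then have "DD x y = 0" "DD y z = 0" by (metis DD_nonneg max.cobounded1 max.cobounded2 antisym)+
    then show ?thesis by (simp add: DD_zero DD_nonneg)
  next
    case 2
    then have "DD x y \<le> (1/2)^n" "DD y z \<le> (1/2)^n" by (metis max.cobounded1 max.cobounded2)+
    then have "agree x z n" by (meson DD_le_iff agree_trans)
    then show ?thesis using 2 DD_le_iff by metis
  qed
qed

lemma DD_triangle: "DD x z \<le> DD x y + DD y z"
  using DD_ultra[of x z y] DD_nonneg[of x y] DD_nonneg[of y z] by linarith

lemma Metric_DD: "Metric_space A DD"
  by unfold_locales (auto simp: DD_nonneg DD_commute DD_zero DD_triangle)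


interpretation sm: Metric_space SS DD by (rule Metric_DD)

lemma agree_mono: "agree x y L \<Longrightarrow> L' \<le> L \<Longrightarrow> agree x y L'"
  by (auto simp: agree_def)

lemma agree_sym: "agree x y L \<Longrightarrow> agree y x L"
  by (auto simp: agree_def)

lemma ex_half_pow: "0 < (r::real) \<Longrightarrow> \<exists>L. (1/2)^L < r"
  by (rule real_arch_pow_inv) auto

lemma openin_char:
  "openin sm.mtopology U \<longleftrightarrow> U \<subseteq> SS \<and> (\<forall>x\<in>U. \<exists>L. \<forall>y\<in>SS. agree x y L \<longrightarrow> y \<in> U)"
proof
  assume U: "openin sm.mtopology U"
  show "U \<subseteq> SS \<and> (\<forall>x\<in>U. \<exists>L. \<forall>y\<in>SS. agree x y L \<longrightarrow> y \<in> U)"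
  proof (intro conjI ballI)
    show "U \<subseteq> SS" using U sm.openin_mtopology by blast
    fix x assume x: "x \<in> U"
    then obtain r where r: "r > 0" "sm.mball x r \<subseteq> U" using U sm.openin_mtopology by blast
    obtain L where L: "(1/2)^L < r" using ex_half_pow r(1) by blast
    have "\<forall>y\<in>SS. agree x y L \<longrightarrow> y \<in> U"
    proof (intro ballI impI)
      fix y assume y: "y \<in> SS" "agree x y L"
      then have "DD x y < r" using DD_le_iff L by (meson order_le_less_trans)
      moreover have "x \<in> SS" using x \<open>U \<subseteq> SS\<close> by blast
      ultimately have "y \<in> sm.mball x r" using y(1) by (simp add: sm.in_mball)
      then show "y \<in> U" using r(2) by blast
    qed
    then show "\<exists>L. \<forall>y\<in>SS. agree x y L \<longrightarrow> y \<in> U" by blast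
  qed
next
  assume R: "U \<subseteq> SS \<and> (\<forall>x\<in>U. \<exists>L. \<forall>y\<in>SS. agree x y L \<longrightarrow> y \<in> U)"
  show "openin sm.mtopology U"
    unfolding sm.openin_mtopology
  proof (intro conjI allI impI)
    show "U \<subseteq> SS" using R by blast
    fix x assume x: "x \<in> U"
    then obtain L where L: "\<forall>y\<in>SS. agree x y L \<longrightarrow> y \<in> U" using R by blast
    have "sm.mball x ((1/2)^L) \<subseteq> U"
    proof
      fix y assume "y \<in> sm.mball x ((1/2)^L)"
      then have "y \<in> SS" "DD x y < (1/2)^L" by (auto simp: sm.in_mball)
      then show "y \<in> U" using L DD_less_iff agree_mono by (metis le_SucI order_refl)
    qed
    then show "\<exists>r>0. sm.mball x r \<subseteq> U" by (intro exI[of _ "(1/2)^L"]) auto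
  qed
qed

definition dep :: "nat \<Rightarrow> ((nat \<Rightarrow> bool) \<Rightarrow> bool) \<Rightarrow> bool" where
  "dep L P \<longleftrightarrow> (\<forall>x y. agree x y L \<longrightarrow> P x = P y)"

lemma open_cyl: "dep L P \<Longrightarrow> openin sm.mtopology {x\<in>SS. P x}"
  unfolding openin_char dep_def by blast

lemma closed_cyl: "dep L P \<Longrightarrow> closedin sm.mtopology {x\<in>SS. P x}"
proof -
  assume "dep L P"
  then have "dep L (\<lambda>x. \<not> P x)" by (simp add: dep_def)
  then have "openin sm.mtopology {x\<in>SS. \<not> P x}" by (rule open_cyl)
  moreover have "SS - {x\<in>SS. P x} = {x\<in>SS. \<not> P x}" by auto
  ultimately show ?thesis by (simp add: closedin_def)
qed

lemma closure_crit:
  assumes "y \<in> SS" "\<And>L. \<exists>a\<in>A. a \<in> SS \<and> agree y a L"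
  shows "y \<in> sm.mtopology closure_of A"
proof -
  have "\<forall>r>0. \<exists>a\<in>A. a \<in> sm.mball y r"
  proof (intro allI impI)
    fix r :: real assume r: "r > 0"
    obtain L where L: "(1/2)^L < r" using ex_half_pow r by blast
    obtain a where a: "a \<in> A" "a \<in> SS" "agree y a L" using assms(2) by blast
    then have "DD y a < r" using DD_le_iff L by (meson order_le_less_trans)
    then show "\<exists>a\<in>A. a \<in> sm.mball y r" using a assms(1) by (auto simp: sm.in_mball)
  qed
  then show ?thesis unfolding sm.metric_closure_of using assms(1) by blast
qed


abbreviation PT :: "(nat \<Rightarrow> bool) topology" where
  "PT \<equiv> product_topology (\<lambda>_::nat. discrete_topology (UNIV::bool set)) UNIV"

lemma topspace_PT [simp]: "topspace PT = UNIV"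
  by (auto simp: PiE_def extensional_def)

lemma open_PT_coord: "openin PT {x. x k = c}"
proof -
  have "openin PT {x \<in> topspace PT. x k \<in> {c}}"
    by (rule openin_continuous_map_preimage[OF continuous_map_product_projection]) auto
  then show ?thesis by simp
qed

lemma open_PT_agree: "openin PT {x. agree y x L}"
proof (induction L)
  case 0
  then show ?case using openin_topspace[of PT] by (simp add: agree_def)
next
  case (Suc L)
  have "{x. agree y x (Suc L)} = {x. agree y x L} \<inter> {x. x L = y L}"
    by (auto simp: agree_def less_Suc_eq)
  then show ?case using Suc open_PT_coord by auto
qed

lemma open_PT_dep: "dep L P \<Longrightarrow> openin PT {x. P x}"
proof -
  assume d: "dep L P"
  have "{x. P x} = \<Union>{{x. agree y x L} | y. P y}"
  proof
    show "{x. P x} \<subseteq> \<Union>{{x. agree y x L} | y. P y}"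
      by (auto simp: agree_def)
    show "\<Union>{{x. agree y x L} | y. P y} \<subseteq> {x. P x}"
      using d by (auto simp: dep_def)
  qed
  moreover have "openin PT (\<Union>{{x. agree y x L} | y. P y})"
    using open_PT_agree by auto
  ultimately show ?thesis by simp
qed

lemma closed_PT_dep: "dep L P \<Longrightarrow> closedin PT {x. P x}"
proof -
  assume "dep L P"
  then have "dep L (\<lambda>x. \<not> P x)" by (simp add: dep_def)
  then have "openin PT {x. \<not> P x}" by (rule open_PT_dep)
  moreover have "topspace PT - {x. P x} = {x. \<not> P x}" by auto
  ultimately show ?thesis by (simp add: closedin_def)
qed

lemma closed_PT_all: "(\<And>i. closedin PT {x. Q i x}) \<Longrightarrow> closedin PT {x. \<forall>i. Q i x}"
proof -
  assume a: "\<And>i. closedin PT {x. Q i x}"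
  have "{x. \<forall>i. Q i x} = (\<Inter>i\<in>UNIV. {x. Q i x})" by auto
  then show ?thesis using a by (metis (no_types, lifting) UNIV_not_empty closedin_INT)
qed

lemma agree_chg: "agree x y L \<Longrightarrow> Suc n < L \<Longrightarrow> chg x n = chg y n"
  by (simp add: agree_def chg_def)

lemma dep_P1: "dep (Suc (Suc (max i j))) (\<lambda>x. chg x i \<longrightarrow> chg x j \<longrightarrow> even (i+j))"
  unfolding dep_def using agree_chg by (metis le_imp_less_Suc max.cobounded1 max.cobounded2 Suc_less_eq)

lemma dep_P2: "dep (Suc (i+k*k)) (\<lambda>x. card ({n. chg x n} \<inter> {i..<i+k*k}) \<le> k)"
  unfolding dep_def
proof (intro allI impI)
  fix x y assume a: "agree x y (Suc (i+k*k))"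
  have "{n. chg x n} \<inter> {i..<i+k*k} = {n. chg y n} \<inter> {i..<i+k*k}"
    using agree_chg[OF a] by auto
  then show "(card ({n. chg x n} \<inter> {i..<i+k*k}) \<le> k) = (card ({n. chg y n} \<inter> {i..<i+k*k}) \<le> k)"
    by simp
qed

lemma SS_eq: "SS = {x. \<forall>i j. chg x i \<longrightarrow> chg x j \<longrightarrow> even (i+j)} \<inter>
                 {x. \<forall>i k. card ({n. chg x n} \<inter> {i..<i+k*k}) \<le> k}"
  by (auto simp: SS_def good_def)

lemma closed_PT_SS: "closedin PT SS"
proof -
  have "closedin PT {x. \<forall>i j. chg x i \<longrightarrow> chg x j \<longrightarrow> even (i+j)}"
    by (intro closed_PT_all closed_PT_dep[OF dep_P1])
  moreover have "closedin PT {x. \<forall>i k. card ({n. chg x n} \<inter> {i..<i+k*k}) \<le> k}"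
    by (intro closed_PT_all closed_PT_dep[OF dep_P2])
  ultimately show ?thesis unfolding SS_eq by (rule closedin_Int)
qed

lemma compact_PT: "compact_space PT"
  by (simp add: compact_space_product_topology compact_space_discrete_topology)

lemma cont_id: "continuous_map (subtopology PT SS) sm.mtopology id"
  unfolding continuous_map_def
proof (intro conjI allI impI)
  show "id \<in> topspace (subtopology PT SS) \<rightarrow> topspace sm.mtopology" by auto
  fix U assume U: "openin sm.mtopology U"
  then have U1: "U \<subseteq> SS" and U2: "\<forall>x\<in>U. \<exists>L. \<forall>y\<in>SS. agree x y L \<longrightarrow> y \<in> U"
    by (auto simp: openin_char)
  define T where "T = \<Union>{{y. agree x y L} | x L. x \<in> U \<and> (\<forall>y\<in>SS. agree x y L \<longrightarrow> y \<in> U)}"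
  have "openin PT T" unfolding T_def using open_PT_agree by auto
  moreover have "U = T \<inter> SS"
  proof
    show "U \<subseteq> T \<inter> SS"
    proof
      fix x assume x: "x \<in> U"
      then obtain L where "\<forall>y\<in>SS. agree x y L \<longrightarrow> y \<in> U" using U2 by blast
      then show "x \<in> T \<inter> SS" using x U1 unfolding T_def by (auto simp: agree_def)
    qed
    show "T \<inter> SS \<subseteq> U" unfolding T_def by auto
  qed
  ultimately have "openin (subtopology PT SS) U" by (auto simp: openin_subtopology)
  moreover have "{x \<in> topspace (subtopology PT SS). id x \<in> U} = U" using U1 by auto
  ultimately show "openin (subtopology PT SS) {x \<in> topspace (subtopology PT SS). id x \<in> U}"
    by simp
qed

lemma compact_SS: "compact_space sm.mtopology"
proof -
  have "compactin PT SS" by (rule closedin_compact_space[OF compact_PT closed_PT_SS])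
  then have "compact_space (subtopology PT SS)" by (rule compact_space_subtopology)
  then have "compactin (subtopology PT SS) (topspace (subtopology PT SS))"
    by (simp add: compact_space_def)
  then have "compactin sm.mtopology (id ` topspace (subtopology PT SS))"
    by (rule image_compactin[OF _ cont_id])
  then show ?thesis by (simp add: compact_space_def)
qed


lemma good_subset: "good C \<Longrightarrow> B \<subseteq> C \<Longrightarrow> good B"
  unfolding good_def
proof (intro allI)
  fix i k assume g: "\<forall>i k. card (C \<inter> {i..<i + k * k}) \<le> k" and s: "B \<subseteq> C"
  have "card (B \<inter> {i..<i + k * k}) \<le> card (C \<inter> {i..<i + k * k})"
    by (rule card_mono) (use s in auto)
  then show "card (B \<inter> {i..<i + k * k}) \<le> k" using g by (meson order_trans)
qed

lemma good_empty: "good {}" by (simp add: good_def)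

lemma good_single: "good {s}"
  unfolding good_def
proof (intro allI)
  fix i k
  show "card ({s} \<inter> {i..<i + k * k}) \<le> k"
  proof (cases "k = 0")
    case True then show ?thesis by simp
  next
    case False
    have "card ({s} \<inter> {i..<i + k * k}) \<le> card {s}" by (rule card_mono) auto
    then show ?thesis using False by simp
  qed
qed

lemma good_shift: "good C \<Longrightarrow> good ((\<lambda>c. c + n) ` C)"
  unfolding good_def
proof (intro allI)
  fix i k assume g: "\<forall>i k. card (C \<inter> {i..<i + k * k}) \<le> k"
  have "(\<lambda>c. c + n) ` C \<inter> {i..<i + k * k} \<subseteq> (\<lambda>c. c + n) ` (C \<inter> {i-n..<i-n + k * k})"
  proof
    fix z assume "z \<in> (\<lambda>c. c + n) ` C \<inter> {i..<i + k * k}"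
    then obtain c where c: "c \<in> C" "z = c + n" "i \<le> c + n" "c + n < i + k * k" by auto
    then have "c \<in> C \<inter> {i-n..<i-n + k * k}" by auto
    then show "z \<in> (\<lambda>c. c + n) ` (C \<inter> {i-n..<i-n + k * k})" using c(2) by blast
  qed
  then have "card ((\<lambda>c. c + n) ` C \<inter> {i..<i + k * k}) \<le> card ((\<lambda>c. c + n) ` (C \<inter> {i-n..<i-n + k * k}))"
    by (intro card_mono) auto
  also have "\<dots> \<le> card (C \<inter> {i-n..<i-n + k * k})" by (rule card_image_le) auto
  also have "\<dots> \<le> k" using g by blast
  finally show "card ((\<lambda>c. c + n) ` C \<inter> {i..<i + k * k}) \<le> k" .
qed

lemma good_unshift: "good C \<Longrightarrow> good {c. c + n \<in> C}"
  unfolding good_def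
proof (intro allI)
  fix i k assume g: "\<forall>i k. card (C \<inter> {i..<i + k * k}) \<le> k"
  have e: "(\<lambda>c. c + n) ` ({c. c + n \<in> C} \<inter> {i..<i + k * k}) \<subseteq> C \<inter> {i+n..<i+n + k * k}"
    by auto
  have "card ({c. c + n \<in> C} \<inter> {i..<i + k * k}) = card ((\<lambda>c. c + n) ` ({c. c + n \<in> C} \<inter> {i..<i + k * k}))"
    by (rule card_image[symmetric]) (auto simp: inj_on_def)
  also have "\<dots> \<le> card (C \<inter> {i+n..<i+n + k * k})" by (intro card_mono e) auto
  also have "\<dots> \<le> k" using g by blast
  finally show "card ({c. c + n \<in> C} \<inter> {i..<i + k * k}) \<le> k" .
qed

lemma good_union:
  assumes gA: "good A" and gB: "good B" and fin: "finite (A \<union> B)" and cK: "card (A \<union> B) \<le> K"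
    and sep: "\<And>a b. a \<in> A \<Longrightarrow> b \<in> B \<Longrightarrow> a + K*K < b"
  shows "good (A \<union> B)"
  unfolding good_def
proof (intro allI)
  fix i k
  let ?W = "{i..<i + k * k} :: nat set"
  show "card ((A \<union> B) \<inter> ?W) \<le> k"
  proof (cases "A \<inter> ?W = {}")
    case True
    then have "(A \<union> B) \<inter> ?W = B \<inter> ?W" by auto
    then show ?thesis using gB by (simp add: good_def)
  next
    case False
    then obtain a where a: "a \<in> A" "a \<in> ?W" by blast
    show ?thesis
    proof (cases "B \<inter> ?W = {}")
      case True
      then have "(A \<union> B) \<inter> ?W = A \<inter> ?W" by auto
      then show ?thesis using gA by (simp add: good_def)
    next
      case False
      then obtain b where b: "b \<in> B" "b \<in> ?W" by blast
      have "a + K*K < b" using sep a b by blast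
      moreover have "b < a + k*k" using a b by auto
      ultimately have "K*K < k*k" by linarith
      then have "K < k" by (meson mult_le_mono not_less)
      have "card ((A \<union> B) \<inter> ?W) \<le> card (A \<union> B)" by (rule card_mono[OF fin]) auto
      then show ?thesis using cK \<open>K < k\<close> by linarith
    qed
  qed
qed

lemma funpow_sh: "(sh ^^ n) x = (\<lambda>k. x (k + n))"
proof (induction n)
  case 0 then show ?case by simp
next
  case (Suc n) then show ?case by (simp add: sh_def)
qed

lemma chg_funpow: "chg ((sh ^^ n) x) m = chg x (m + n)"
  by (simp add: funpow_sh chg_def)

lemma SS_parity: "x \<in> SS \<Longrightarrow> chg x i \<Longrightarrow> chg x j \<Longrightarrow> even (i + j)"
  unfolding SS_def by blast

lemma SS_good: "x \<in> SS \<Longrightarrow> good {n. chg x n}"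
  unfolding SS_def by blast

lemma SSI: "(\<And>i j. chg x i \<Longrightarrow> chg x j \<Longrightarrow> even (i + j)) \<Longrightarrow> good {n. chg x n} \<Longrightarrow> x \<in> SS"
  unfolding SS_def by blast

lemma funpow_sh_SS: "x \<in> SS \<Longrightarrow> (sh ^^ n) x \<in> SS"
proof (rule SSI)
  assume x: "x \<in> SS"
  fix i j assume "chg ((sh ^^ n) x) i" "chg ((sh ^^ n) x) j"
  then have "chg x (i + n)" "chg x (j + n)" by (simp_all add: chg_funpow)
  then have "even (i + n + (j + n))" using SS_parity[OF x] by blast
  then show "even (i + j)" by presburger
next
  assume x: "x \<in> SS"
  have "{m. chg ((sh ^^ n) x) m} = {c. c + n \<in> {n. chg x n}}" by (simp add: chg_funpow)
  then show "good {m. chg ((sh ^^ n) x) m}" using good_unshift[OF SS_good[OF x]] by simp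
qed

lemma sh_SS: "x \<in> SS \<Longrightarrow> sh x \<in> SS"
  using funpow_sh_SS[of x 1] by simp

lemma sh_surj: "sh ` SS = SS"
proof
  show "sh ` SS \<subseteq> SS" using sh_SS by blast
  show "SS \<subseteq> sh ` SS"
  proof
    fix x assume x: "x \<in> SS"
    define y where "y = (\<lambda>n. case n of 0 \<Rightarrow> x 0 | Suc k \<Rightarrow> x k)"
    have cy0: "\<not> chg y 0" by (simp add: y_def chg_def)
    have cyS: "chg y (Suc k) = chg x k" for k by (simp add: y_def chg_def)
    have cy: "chg y m \<Longrightarrow> \<exists>k. m = Suc k \<and> chg x k" for m
      using cy0 cyS by (cases m) auto
    have "y \<in> SS"
    proof (rule SSI)
      fix i j assume "chg y i" "chg y j"
      then obtain i' j' where "i = Suc i'" "j = Suc j'" "chg x i'" "chg x j'" using cy by blast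
      then have "even (i' + j')" "i = Suc i'" "j = Suc j'" using SS_parity[OF x] by blast+
      then show "even (i + j)" by simp
    next
      have "{m. chg y m} = (\<lambda>c. c + 1) ` {n. chg x n}"
      proof (intro set_eqI iffI)
        fix m assume "m \<in> {m. chg y m}"
        then obtain k where "m = Suc k" "chg x k" using cy by blast
        then show "m \<in> (\<lambda>c. c + 1) ` {n. chg x n}" by simp
      next
        fix m assume "m \<in> (\<lambda>c. c + 1) ` {n. chg x n}"
        then obtain k where "m = Suc k" "chg x k" by auto
        then show "m \<in> {m. chg y m}" using cyS by simp
      qed
      then show "good {m. chg y m}" using good_shift[OF SS_good[OF x], of 1] by (simp only:)
    qed
    moreover have "sh y = x" by (simp add: sh_def y_def)
    ultimately show "x \<in> sh ` SS" by blast
  qed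
qed

lemma const_SS: "(\<lambda>_. c) \<in> SS"
  by (rule SSI) (auto simp: chg_def good_empty)

lemma chg_const: "\<not> chg (\<lambda>_. c) n" by (simp add: chg_def)


definition glue :: "(nat \<Rightarrow> bool) \<Rightarrow> (nat \<Rightarrow> bool) \<Rightarrow> nat \<Rightarrow> nat \<Rightarrow> nat \<Rightarrow> nat \<Rightarrow> bool" where
  "glue a b L s n k = (if k < L then a k else if k < s then a (L-1) else if k < n then b 0
                       else if k < n + L then b (k - n) else b (L-1))"

lemma chg_glue:
  assumes "1 \<le> L" "L < s" "s < n"
  shows "chg (glue a b L s n) m \<longleftrightarrow>
     (Suc m < L \<and> chg a m) \<or> (m = s - 1 \<and> a (L-1) \<noteq> b 0) \<or> (n \<le> m \<and> Suc m < n + L \<and> chg b (m - n))"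
proof -
  consider "Suc m < L" | "Suc m = L" | "L \<le> m" "Suc m < s" | "Suc m = s" | "s \<le> m" "Suc m < n"
    | "Suc m = n" | "n \<le> m" "Suc m < n + L" | "Suc m = n + L" | "n + L \<le> m" by linarith
  then show ?thesis
  proof cases
    case 1 then show ?thesis using assms by (auto simp: chg_def glue_def)
  next
    case 2 then show ?thesis using assms by (auto simp: chg_def glue_def)
  next
    case 3 then show ?thesis using assms by (auto simp: chg_def glue_def)
  next
    case 4 then show ?thesis using assms by (auto simp: chg_def glue_def)
  next
    case 5 then show ?thesis using assms by (auto simp: chg_def glue_def)
  next
    case 6 then show ?thesis using assms by (auto simp: chg_def glue_def)
  next
    case 7
    then have "m - n < L" "Suc m - n = Suc (m - n)" by auto
    then show ?thesis using 7 assms by (auto simp: chg_def glue_def)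
  next
    case 8
    then have "m - n = L - 1" by auto
    then show ?thesis using 8 assms by (auto simp: chg_def glue_def)
  next
    case 9 then show ?thesis using assms by (auto simp: chg_def glue_def)
  qed
qed

definition par :: "(nat \<Rightarrow> bool) \<Rightarrow> nat" where
  "par x = (if \<exists>i. chg x i then SOME i. chg x i else 0)"

lemma par_SS: "x \<in> SS \<Longrightarrow> chg x i \<Longrightarrow> even (i + par x)"
proof -
  assume x: "x \<in> SS" and c: "chg x i"
  then have "\<exists>i. chg x i" by blast
  then have "chg x (par x)" unfolding par_def by (simp add: someI_ex)
  then show ?thesis using SS_parity[OF x c] by blast
qed

lemma card_prefix_chg: "card {m. Suc m < L \<and> chg a m} \<le> L"
proof -
  have "{m. Suc m < L \<and> chg a m} \<subseteq> {..<L}" by auto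
  then show ?thesis by (metis card_lessThan card_mono finite_lessThan)
qed

lemma glue_SS:
  assumes a: "a \<in> SS" and b: "b \<in> SS" and L: "1 \<le> L" and K: "K = 2*L+1"
    and s1: "L + K*K < s" and n1: "s + K*K \<le> n"
    and ps: "even (s - 1 + par a)" and pn: "even (n + par b + par a)"
  shows "glue a b L s n \<in> SS"
proof -
  have K1: "1 \<le> K*K" using K by simp
  have Ls: "L < s" using s1 by linarith
  have sn: "s < n" using n1 K1 by linarith
  define A where "A = {m. Suc m < L \<and> chg a m}"
  define B1 where "B1 = {m. m = s - 1 \<and> a (L-1) \<noteq> b 0}"
  define B2 where "B2 = (\<lambda>c. c + n) ` {m. Suc m < L \<and> chg b m}"
  have ch: "{m. chg (glue a b L s n) m} = A \<union> (B1 \<union> B2)"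
  proof -
    have "{m. n \<le> m \<and> Suc m < n + L \<and> chg b (m - n)} = B2"
      unfolding B2_def
    proof (intro set_eqI iffI)
      fix m assume "m \<in> {m. n \<le> m \<and> Suc m < n + L \<and> chg b (m - n)}"
      then show "m \<in> (\<lambda>c. c + n) ` {m. Suc m < L \<and> chg b m}"
        by (auto intro!: image_eqI[where x="m - n"])
    qed auto
    then show ?thesis using chg_glue[OF L Ls sn] unfolding A_def B1_def by auto
  qed
  have gA: "good A" unfolding A_def by (rule good_subset[OF SS_good[OF a]]) auto
  have gB2: "good B2" unfolding B2_def
    by (rule good_shift, rule good_subset[OF SS_good[OF b]]) auto
  have gB1: "good B1"
    by (cases "a (L-1) \<noteq> b 0") (auto simp: B1_def good_single good_empty)
  have fA: "finite A" unfolding A_def by (rule finite_subset[of _ "{..<L}"]) auto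
  have fB1: "finite B1" unfolding B1_def by auto
  have fB2: "finite B2" unfolding B2_def by (rule finite_imageI, rule finite_subset[of _ "{..<L}"]) auto
  have cA: "card A \<le> L" unfolding A_def by (rule card_prefix_chg)
  have cB2: "card B2 \<le> L"
  proof -
    have "card B2 \<le> card {m. Suc m < L \<and> chg b m}" unfolding B2_def by (rule card_image_le) (rule finite_subset[of _ "{..<L}"], auto)
    then show ?thesis using card_prefix_chg[of L b] by linarith
  qed
  have cB1: "card B1 \<le> 1" unfolding B1_def by (cases "a (L-1) \<noteq> b 0") auto
  have cB: "card (B1 \<union> B2) \<le> K"
    using card_Un_le[of B1 B2] cB1 cB2 K by linarith
  have gB: "good (B1 \<union> B2)"
  proof (rule good_union[OF gB1 gB2 _ cB])
    show "finite (B1 \<union> B2)" using fB1 fB2 by auto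
    fix x y assume x: "x \<in> B1" and y: "y \<in> B2"
    have "x = s - 1" using x unfolding B1_def by auto
    moreover have "n \<le> y" using y unfolding B2_def by auto
    ultimately show "x + K*K < y" using n1 Ls by linarith
  qed
  have cAB: "card (A \<union> (B1 \<union> B2)) \<le> K"
  proof -
    have "card (A \<union> (B1 \<union> B2)) \<le> card A + card B1 + card B2"
      using card_Un_le[of A "B1 \<union> B2"] card_Un_le[of B1 B2] by linarith
    then show ?thesis using cA cB1 cB2 K by linarith
  qed
  have gAB: "good (A \<union> (B1 \<union> B2))"
  proof (rule good_union[OF gA gB _ cAB])
    show "finite (A \<union> (B1 \<union> B2))" using fA fB1 fB2 by auto
    fix x y assume x: "x \<in> A" and y: "y \<in> B1 \<union> B2"
    have "x < L" using x unfolding A_def by auto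
    moreover have "s - 1 \<le> y"
    proof -
      have "y \<in> B1 \<or> y \<in> B2" using y by blast
      then show ?thesis unfolding B1_def B2_def using sn by auto
    qed
    ultimately show "x + K*K < y" using s1 by linarith
  qed
  have par_all: "even (m + par a)" if "chg (glue a b L s n) m" for m
  proof -
    have "m \<in> A \<union> (B1 \<union> B2)" using that ch by blast
    then consider "m \<in> A" | "m \<in> B1" | "m \<in> B2" by blast
    then show ?thesis
    proof cases
      case 1 then show ?thesis using par_SS[OF a] unfolding A_def by auto
    next
      case 2 then show ?thesis using ps unfolding B1_def by auto
    next
      case 3
      then obtain c where c: "m = c + n" "chg b c" unfolding B2_def by auto
      have "even (c + par b)" using par_SS[OF b c(2)] .
      then show ?thesis using pn c(1) by presburger
    qed
  qed
  show ?thesis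
  proof (rule SSI)
    fix i j assume "chg (glue a b L s n) i" "chg (glue a b L s n) j"
    then have "even (i + par a)" "even (j + par a)" using par_all by auto
    then show "even (i + j)" by presburger
  next
    show "good {m. chg (glue a b L s n) m}" using ch gAB by simp
  qed
qed


lemma opeSS: "opene SS DD U \<longleftrightarrow> U \<noteq> {} \<and> U \<subseteq> SS \<and> (\<forall>x\<in>U. \<exists>L. \<forall>y\<in>SS. agree x y L \<longrightarrow> y \<in> U)"
  unfolding opene_def using openin_char by blast

lemma mixing:
  assumes U: "opene SS DD U" and V: "opene SS DD V"
  shows "\<exists>M \<rho>. \<forall>n\<ge>M. even (n + \<rho>) \<longrightarrow> n \<in> hitting_times sh U V"
proof -
  obtain a where a: "a \<in> U" using U opeSS by blast
  obtain La where La: "\<forall>y\<in>SS. agree a y La \<longrightarrow> y \<in> U" using U a opeSS by blast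
  obtain b where b: "b \<in> V" using V opeSS by blast
  obtain Lb where Lb: "\<forall>y\<in>SS. agree b y Lb \<longrightarrow> y \<in> V" using V b opeSS by blast
  have aS: "a \<in> SS" and bS: "b \<in> SS" using a b U V opeSS by blast+
  define L where "L = Suc (max La Lb)"
  define K where "K = 2*L+1"
  define t where "t = L + K*K"
  define e where "e = (if even (t + par a) then 0 else (1::nat))"
  define s where "s = t + 1 + e"
  have ps: "even (s - 1 + par a)"
  proof -
    have "s - 1 = t + e" unfolding s_def by simp
    then show ?thesis unfolding e_def by (cases "even (t + par a)") presburger+
  qed
  have s1: "L + K*K < s" unfolding s_def t_def by simp
  have L1: "1 \<le> L" unfolding L_def by simp
  show ?thesis
  proof (intro exI allI impI)
    fix n assume n: "s + K*K \<le> n" and pn: "even (n + (par b + par a))"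
    define z where "z = glue a b L s n"
    have zS: "z \<in> SS" unfolding z_def
      by (rule glue_SS[OF aS bS L1 K_def s1 n ps]) (use pn in presburger)
    have K1: "1 \<le> K*K" unfolding K_def by simp
    have Ls: "L < s" using s1 by linarith
    have sn: "s < n" using n K1 by linarith
    have "agree a z La" unfolding agree_def z_def glue_def L_def by auto
    then have zU: "z \<in> U" using La zS by blast
    have "agree b ((sh^^n) z) Lb" unfolding agree_def z_def glue_def funpow_sh
      using sn Ls unfolding L_def by auto
    then have "(sh^^n) z \<in> V" using Lb funpow_sh_SS[OF zS] by blast
    then show "n \<in> hitting_times sh U V" using zU unfolding hitting_times_def by blast
  qed
qed

lemma no_change_const:
  assumes H: "\<forall>m. i \<le> m \<longrightarrow> m < i + L \<longrightarrow> \<not> chg x m"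
  shows "j \<le> L \<Longrightarrow> x (i + j) = x i"
proof (induction j)
  case 0 then show ?case by simp
next
  case (Suc j)
  have jL: "j \<le> L" "j < L" using Suc.prems by simp_all
  have e1: "x (i + j) = x i" using Suc.IH jL(1) by blast
  have "\<not> chg x (i + j)" using H jL(2) by simp
  then have "x (Suc (i + j)) = x (i + j)" unfolding chg_def by blast
  then show ?case using e1 by simp
qed

lemma count_lemma:
  assumes H: "\<forall>i\<ge>M. \<exists>n. i \<le> n \<and> n < i + L \<and> chg x n"
  shows "m \<le> card ({n. chg x n} \<inter> {M..<M+m*L})"
proof (induction m)
  case 0 then show ?case by simp
next
  case (Suc m)
  define C where "C = {n. chg x n}"
  define a where "a = M + m*L"
  have e: "M + Suc m * L = a + L" unfolding a_def by simp
  have ma: "M \<le> a" unfolding a_def by simp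
  have iv: "{M..<a + L} = {M..<a} \<union> {a..<a+L}" using ivl_disj_un_two(3)[of M a "a+L"] ma by simp
  have split: "C \<inter> {M..<a + L} = (C \<inter> {M..<a}) \<union> (C \<inter> {a..<a+L})"
    unfolding iv by blast
  obtain n where n: "a \<le> n" "n < a + L" "chg x n" using H ma by blast
  then have "n \<in> C \<inter> {a..<a+L}" unfolding C_def by simp
  then have "C \<inter> {a..<a+L} \<noteq> {}" by blast
  then have c1: "1 \<le> card (C \<inter> {a..<a+L})"
    by (simp add: Suc_le_eq card_gt_0_iff)
  have "card (C \<inter> {M..<a + L}) = card (C \<inter> {M..<a}) + card (C \<inter> {a..<a+L})"
    unfolding split by (rule card_Un_disjoint) auto
  moreover have "m \<le> card (C \<inter> {M..<a})" using Suc.IH unfolding C_def a_def .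
  ultimately have "Suc m \<le> card (C \<inter> {M..<a + L})" using c1 by linarith
  then show ?case unfolding C_def e .
qed

lemma long_run:
  assumes x: "x \<in> SS"
  shows "\<exists>c. \<forall>L M. \<exists>i\<ge>M. \<forall>j\<le>L. x (i+j) = c"
proof (rule ccontr)
  assume "\<not> ?thesis"
  then have H: "\<forall>c. \<exists>L M. \<forall>i\<ge>M. \<exists>j\<le>L. x (i+j) \<noteq> c"
    by (simp only: not_ex not_all not_imp not_le) (meson not_le)
  have HT: "\<exists>L M. \<forall>i\<ge>M. \<exists>j\<le>L. x (i+j) \<noteq> True" using spec[OF H, of True] .
  have HF: "\<exists>L M. \<forall>i\<ge>M. \<exists>j\<le>L. x (i+j) \<noteq> False" using spec[OF H, of False] .
  obtain L1 M1 where h1: "\<forall>i\<ge>M1. \<exists>j\<le>L1. x (i+j) \<noteq> True" using HT by blast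
  obtain L0 M0 where h0: "\<forall>i\<ge>M0. \<exists>j\<le>L0. x (i+j) \<noteq> False" using HF by blast
  define L where "L = max L0 L1"
  define M where "M = max M0 M1"
  have ch: "\<forall>i\<ge>M. \<exists>n. i \<le> n \<and> n < i + L \<and> chg x n"
  proof (intro allI impI)
    fix i assume i: "M \<le> i"
    have "M1 \<le> i" "M0 \<le> i" using i unfolding M_def by simp_all
    obtain j1 where "j1 \<le> L1" "x (i+j1) \<noteq> True" using h1 \<open>M1 \<le> i\<close> by blast
    obtain j0 where "j0 \<le> L0" "x (i+j0) \<noteq> False" using h0 \<open>M0 \<le> i\<close> by blast
    have j1: "j1 \<le> L" "x (i+j1) = False" unfolding L_def using \<open>j1 \<le> L1\<close> \<open>x (i+j1) \<noteq> True\<close> by auto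
    have j0: "j0 \<le> L" "x (i+j0) = True" unfolding L_def using \<open>j0 \<le> L0\<close> \<open>x (i+j0) \<noteq> False\<close> by auto
    show "\<exists>n. i \<le> n \<and> n < i + L \<and> chg x n"
    proof (rule ccontr)
      assume "\<not> ?thesis"
      then have "\<forall>m. i \<le> m \<longrightarrow> m < i + L \<longrightarrow> \<not> chg x m" by blast
      then have "x (i+j1) = x i" "x (i+j0) = x i" using no_change_const[of i L x] j0 j1 by blast+
      then show False using j0 j1 by simp
    qed
  qed
  have "L + 2 \<le> card ({n. chg x n} \<inter> {M..<M+(L+2)*L})" by (rule count_lemma[OF ch])
  also have "\<dots> \<le> card ({n. chg x n} \<inter> {M..<M+(L+1)*(L+1)})"
  proof -
    define P where "P = (L+2)*L"
    define Q where "Q = (L+1)*(L+1)"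
    have "P \<le> Q" unfolding P_def Q_def by (simp add: algebra_simps)
    then have "{M..<M+P} \<subseteq> {M..<M+Q}" by simp
    then have "{n. chg x n} \<inter> {M..<M+P} \<subseteq> {n. chg x n} \<inter> {M..<M+Q}" by blast
    then show ?thesis unfolding P_def Q_def by (rule card_mono[rotated]) simp
  qed
  also have "\<dots> \<le> L + 1" using SS_good[OF x] unfolding good_def by blast
  finally show False by linarith
qed

lemma in_omegaNT:
  assumes x: "x \<in> SS" and run: "\<forall>L M. \<exists>i\<ge>M. \<forall>j\<le>L. x (i+j) = c"
  shows "(\<lambda>_. c) \<in> omega_NT SS DD sh x"
  unfolding omega_NT_def
proof (intro IntI InterI)
  show "(\<lambda>_. c) \<in> SS" by (rule const_SS)
  fix Z assume "Z \<in> (\<lambda>F. sm.mtopology closure_of ((\<lambda>i. (sh ^^ i) x) ` F)) ` hitting_family SS DD sh"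
  then obtain F where F: "F \<in> hitting_family SS DD sh"
    and Z: "Z = sm.mtopology closure_of ((\<lambda>i. (sh ^^ i) x) ` F)" by blast
  obtain U V where UV: "opene SS DD U" "opene SS DD V" "hitting_times sh U V \<subseteq> F"
    using F unfolding hitting_family_def by blast
  obtain M \<rho> where M: "\<forall>n\<ge>M. even (n + \<rho>) \<longrightarrow> n \<in> hitting_times sh U V"
    using mixing[OF UV(1,2)] by blast
  have "(\<lambda>_. c) \<in> sm.mtopology closure_of ((\<lambda>i. (sh ^^ i) x) ` F)"
  proof (rule closure_crit[OF const_SS])
    fix L
    obtain i where i: "i \<ge> M" "\<forall>j\<le>Suc L. x (i+j) = c" using run by blast
    define n where "n = (if even (i + \<rho>) then i else Suc i)"
    have "n \<ge> M" "even (n + \<rho>)" unfolding n_def using i by auto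
    then have nF: "n \<in> F" using M UV(3) by blast
    have "agree (\<lambda>_. c) ((sh^^n) x) L" unfolding agree_def funpow_sh
    proof (intro allI impI)
      fix k assume k: "k < L"
      have "k + n = i + (k + n - i)" "k + n - i \<le> Suc L" unfolding n_def using k by auto
      then show "c = x (k + n)" using i(2) by metis
    qed
    then show "\<exists>a\<in>(\<lambda>i. (sh ^^ i) x) ` F. a \<in> SS \<and> agree (\<lambda>_. c) a L"
      using nF funpow_sh_SS[OF x] by blast
  qed
  then show "(\<lambda>_. c) \<in> Z" using Z by simp
qed

lemma tc_SS: "transitive_compact SS DD sh"
  unfolding transitive_compact_def
proof
  fix x assume x: "x \<in> SS"
  obtain c where "\<forall>L M. \<exists>i\<ge>M. \<forall>j\<le>L. x (i+j) = c" using long_run[OF x] by blast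
  then show "omega_NT SS DD sh x \<noteq> {}" using in_omegaNT[OF x] by blast
qed


definition U0 :: "(nat \<Rightarrow> bool) set" where "U0 = {y\<in>SS. chg y 0}"
definition V1 :: "(nat \<Rightarrow> bool) set" where "V1 = {y\<in>SS. chg y 1}"

lemma w0_SS: "(\<lambda>k. 0 < (k::nat)) \<in> SS"
proof (rule SSI)
  have e: "{n. chg (\<lambda>k. 0 < (k::nat)) n} = {0}" by (auto simp: chg_def)
  then show "good {n. chg (\<lambda>k. 0 < (k::nat)) n}" by (simp add: good_single)
  fix i j assume ci: "chg (\<lambda>k. 0 < (k::nat)) i" and cj: "chg (\<lambda>k. 0 < (k::nat)) j"
  have "i \<in> {n. chg (\<lambda>k. 0 < (k::nat)) n}" "j \<in> {n. chg (\<lambda>k. 0 < (k::nat)) n}" using ci cj by simp_all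
  then have "i = 0" "j = 0" unfolding e by simp_all
  then show "even (i + j)" by simp
qed

lemma w1_SS: "(\<lambda>k. 1 < (k::nat)) \<in> SS"
proof (rule SSI)
  have e: "{n. chg (\<lambda>k. 1 < (k::nat)) n} = {1}" by (auto simp: chg_def)
  then show "good {n. chg (\<lambda>k. 1 < (k::nat)) n}" by (simp add: good_single)
  fix i j assume ci: "chg (\<lambda>k. 1 < (k::nat)) i" and cj: "chg (\<lambda>k. 1 < (k::nat)) j"
  have "i \<in> {n. chg (\<lambda>k. 1 < (k::nat)) n}" "j \<in> {n. chg (\<lambda>k. 1 < (k::nat)) n}" using ci cj by simp_all
  then have "i = 1" "j = 1" unfolding e by simp_all
  then show "even (i + j)" by simp
qed

lemma dep_chg: "dep (Suc (Suc m)) (\<lambda>y. P (chg y m))"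
  unfolding dep_def
proof (intro allI impI)
  fix x y assume "agree x y (Suc (Suc m))"
  then have "chg x m = chg y m" by (rule agree_chg) simp
  then show "P (chg x m) = P (chg y m)" by simp
qed

lemma opene_U0: "opene SS DD U0"
  unfolding opene_def U0_def
proof
  show "openin sm.mtopology {y \<in> SS. chg y 0}" using open_cyl[OF dep_chg[of 0 "\<lambda>b. b"]] by simp
  have "chg (\<lambda>k. 0 < (k::nat)) 0" by (simp add: chg_def)
  then show "{y \<in> SS. chg y 0} \<noteq> {}" using w0_SS by blast
qed

lemma opene_V1: "opene SS DD V1"
  unfolding opene_def V1_def
proof
  show "openin sm.mtopology {y \<in> SS. chg y 1}" using open_cyl[OF dep_chg[of 1 "\<lambda>b. b"]] by simp
  have "chg (\<lambda>k. 1 < (k::nat)) 1" by (simp add: chg_def)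
  then show "{y \<in> SS. chg y 1} \<noteq> {}" using w1_SS by blast
qed

lemma cont_sh: "continuous_map sm.mtopology sm.mtopology sh"
  unfolding continuous_map_def
proof (intro conjI allI impI)
  show "sh \<in> topspace sm.mtopology \<rightarrow> topspace sm.mtopology" using sh_SS by auto
  fix U assume U: "openin sm.mtopology U"
  then have U1: "U \<subseteq> SS" and U2: "\<forall>x\<in>U. \<exists>L. \<forall>y\<in>SS. agree x y L \<longrightarrow> y \<in> U"
    by (auto simp: openin_char)
  show "openin sm.mtopology {x \<in> topspace sm.mtopology. sh x \<in> U}"
    unfolding openin_char
  proof (intro conjI ballI)
    show "{x \<in> topspace sm.mtopology. sh x \<in> U} \<subseteq> SS" by auto
    fix x assume x: "x \<in> {x \<in> topspace sm.mtopology. sh x \<in> U}"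
    then obtain L where L: "\<forall>y\<in>SS. agree (sh x) y L \<longrightarrow> y \<in> U" using U2 by auto
    have "\<forall>y\<in>SS. agree x y (Suc L) \<longrightarrow> y \<in> {x \<in> topspace sm.mtopology. sh x \<in> U}"
    proof (intro ballI impI)
      fix y assume y: "y \<in> SS" "agree x y (Suc L)"
      then have "agree (sh x) (sh y) L" by (auto simp: agree_def sh_def)
      then show "y \<in> {x \<in> topspace sm.mtopology. sh x \<in> U}" using L sh_SS[OF y(1)] y(1) by auto
    qed
    then show "\<exists>L. \<forall>y\<in>SS. agree x y L \<longrightarrow> y \<in> {x \<in> topspace sm.mtopology. sh x \<in> U}" by blast
  qed
qed

lemma funpow_const: "(sh ^^ n) (\<lambda>_. c) = (\<lambda>_. c)"
  by (simp add: funpow_sh)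

lemma no_isolated:
  assumes x: "x \<in> SS" shows "\<not> openin sm.mtopology {x}"
proof
  assume o: "openin sm.mtopology {x}"
  then have ox: "opene SS DD {x}" by (simp add: opene_def)
  obtain M \<rho> where M: "\<forall>n\<ge>M. even (n + \<rho>) \<longrightarrow> n \<in> hitting_times sh {x} {x}"
    using mixing[OF ox ox] by blast
  define n where "n = M + (if even (M + \<rho>) then 0 else 1)"
  have "n \<in> hitting_times sh {x} {x}" "n + 2 \<in> hitting_times sh {x} {x}"
    using M unfolding n_def by auto
  then have p1: "(sh^^n) x = x" and p2: "(sh^^(n+2)) x = x" by (auto simp: hitting_times_def)
  have per: "x (k + 2) = x k" for k
  proof -
    have "x (k + 2) = x (k + 2 + n)" using fun_cong[OF p1, of "k+2"] unfolding funpow_sh by simp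
    also have "\<dots> = x (k + (n + 2))" by (simp add: algebra_simps)
    also have "\<dots> = x k" using fun_cong[OF p2, of k] unfolding funpow_sh by simp
    finally show ?thesis .
  qed
  have x01: "x 1 = x 0"
  proof (rule ccontr)
    assume "x 1 \<noteq> x 0"
    then have c0: "chg x 0" and c1: "chg x 1" using per[of 0] by (auto simp: chg_def)
    have "even (0 + 1::nat)" using SS_parity[OF x c0 c1] .
    then show False by simp
  qed
  have "x k = x 0 \<and> x (Suc k) = x 0" for k
  proof (induction k)
    case 0 then show ?case using x01 by simp
  next
    case (Suc k) then show ?case using per[of k] by simp
  qed
  then have xc: "x = (\<lambda>_. x 0)" by auto
  obtain M' \<rho>' where M': "\<forall>n\<ge>M'. even (n + \<rho>') \<longrightarrow> n \<in> hitting_times sh {x} U0"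
    using mixing[OF ox opene_U0] by blast
  define n' where "n' = M' + (if even (M' + \<rho>') then 0 else 1)"
  have "n' \<in> hitting_times sh {x} U0" using M' unfolding n'_def by auto
  then have "chg ((sh^^n') x) 0" by (auto simp: hitting_times_def U0_def)
  then show False using xc funpow_const chg_const by metis
qed

lemma dyn_SS: "dyn_sys SS DD sh"
  unfolding dyn_sys_def
proof (intro conjI)
  show "Metric_space SS DD" by (rule Metric_DD)
  show "compact_space sm.mtopology" by (rule compact_SS)
  show "\<exists>x\<in>SS. \<exists>y\<in>SS. x \<noteq> y"
    using const_SS[of True] const_SS[of False] by (metis (full_types))
  show "\<forall>x\<in>SS. \<not> openin sm.mtopology {x}" using no_isolated by blast
  show "continuous_map sm.mtopology sm.mtopology sh" by (rule cont_sh)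
  show "sh ` SS = SS" by (rule sh_surj)
qed

lemma DD_consts: "DD (\<lambda>_. False) (\<lambda>_. True) = 1"
proof -
  have ne: "(\<lambda>_::nat. False) \<noteq> (\<lambda>_. True)" by (metis (full_types))
  then show ?thesis unfolding DD_def by simp
qed

lemma nonprox_SS: "\<not> proximal SS DD sh"
  unfolding proximal_def
proof
  assume "\<forall>x\<in>SS. \<forall>y\<in>SS. liminf (\<lambda>n. ereal (DD ((sh ^^ n) x) ((sh ^^ n) y))) = 0"
  then have "liminf (\<lambda>n. ereal (DD ((sh ^^ n) (\<lambda>_. False)) ((sh ^^ n) (\<lambda>_. True)))) = 0"
    using const_SS by blast
  then show False by (simp add: funpow_const DD_consts Liminf_const)
qed

lemma nott_SS: "\<not> totally_transitive SS DD sh"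
  unfolding totally_transitive_def
proof
  assume "\<forall>k\<ge>1. transitive_sys SS DD (sh ^^ k)"
  then have "transitive_sys SS DD (sh ^^ 2)" by simp
  then have "hitting_times (sh ^^ 2) U0 V1 \<noteq> {}"
    using opene_U0 opene_V1 unfolding transitive_sys_def by blast
  then obtain n y where y: "y \<in> U0" "((sh ^^ 2) ^^ n) y \<in> V1"
    unfolding hitting_times_def by blast
  then have "chg y 0" "chg ((sh ^^ (2*n)) y) 1"
    by (auto simp: U0_def V1_def funpow_mult)
  then have "chg y 0" "chg y (1 + 2*n)" by (auto simp: chg_funpow)
  then have "even (0 + (1 + 2*n))" using SS_parity y(1) unfolding U0_def by blast
  then show False by simp
qed


definition gq :: "nat \<Rightarrow> nat" where "gq j = 2*j*j"

lemma g_Suc: "gq (Suc j) = gq j + 4*j + 2"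
  unfolding gq_def by (simp add: algebra_simps)

lemma g_smono: "strict_mono gq"
  by (rule strict_monoI_Suc) (simp add: g_Suc)

lemma g_less_iff: "gq i < gq j \<longleftrightarrow> i < j"
  using g_smono by (simp add: strict_mono_less)

lemma g_le_iff: "gq i \<le> gq j \<longleftrightarrow> i \<le> j"
  using g_smono by (simp add: strict_mono_less_eq)

lemma g_inj: "gq x = gq y \<Longrightarrow> x = y"
proof -
  assume e: "gq x = gq y"
  then have "x \<le> y" "y \<le> x" using g_le_iff[of x y] g_le_iff[of y x] by simp_all
  then show "x = y" by simp
qed

lemma g_ge: "j \<le> gq j"
proof -
  have "j \<le> j * j" by (rule le_square)
  moreover have "gq j = j*j + j*j" unfolding gq_def by simp
  ultimately show ?thesis by linarith
qed

lemma g_even: "even (gq j)" unfolding gq_def by simp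

lemma g_add: "gq j0 + k*k \<le> gq (j0 + k)"
proof -
  have "gq (j0 + k) = gq j0 + (4*j0*k + 2*(k*k))" unfolding gq_def by (simp add: algebra_simps)
  then show ?thesis by linarith
qed

definition cnt :: "nat \<Rightarrow> nat" where "cnt k = card {j. gq j < k}"
definition xz :: "nat \<Rightarrow> bool" where "xz k = odd (cnt k)"

lemma fin_g: "finite {j. gq j < k}"
proof (rule finite_subset[of _ "{..<k}"])
  show "{j. gq j < k} \<subseteq> {..<k}" using g_ge by (auto intro: le_less_trans)
qed simp

lemma cnt_Suc: "cnt (Suc m) = cnt m + (if \<exists>j. gq j = m then 1 else 0)"
proof (cases "\<exists>j. gq j = m")
  case True
  then obtain j0 where j0: "gq j0 = m" by blast
  have "{j. gq j < Suc m} = insert j0 {j. gq j < m}" using j0 g_inj by (auto simp: less_Suc_eq)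
  moreover have "j0 \<notin> {j. gq j < m}" using j0 by simp
  ultimately have "card {j. gq j < Suc m} = Suc (card {j. gq j < m})" using fin_g by simp
  then show ?thesis using True unfolding cnt_def by simp
next
  case False
  then have "{j. gq j < Suc m} = {j. gq j < m}" using less_Suc_eq by auto
  then show ?thesis using False unfolding cnt_def by simp
qed

lemma chg_xz: "chg xz m \<longleftrightarrow> (\<exists>j. gq j = m)"
  unfolding chg_def xz_def using cnt_Suc[of m] by auto

lemma cnt_val: assumes "gq j < k" "k \<le> gq (Suc j)" shows "cnt k = Suc j"
proof -
  have "{i. gq i < k} = {..j}"
  proof (intro set_eqI iffI)
    fix i assume "i \<in> {i. gq i < k}"
    then have "gq i < gq (Suc j)" using assms(2) by simp
    then show "i \<in> {..j}" using g_less_iff by simp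
  next
    fix i assume "i \<in> {..j}"
    then have "gq i \<le> gq j" using g_le_iff by simp
    then show "i \<in> {i. gq i < k}" using assms(1) by simp
  qed
  then show ?thesis unfolding cnt_def by simp
qed

lemma xz_run: "\<forall>L M. \<exists>i\<ge>M. \<forall>t\<le>L. xz (i+t) = c"
proof (intro allI)
  fix L M
  define j0 :: nat where "j0 = M + L"
  define j where "j = (if odd (Suc j0) = c then j0 else Suc j0)"
  have jc: "odd (Suc j) = c" unfolding j_def by auto
  have jL: "L \<le> j" "M \<le> j" unfolding j_def j0_def by auto
  define i where "i = Suc (gq j)"
  have "\<forall>t\<le>L. xz (i+t) = c"
  proof (intro allI impI)
    fix t assume t: "t \<le> L"
    have "gq j < i + t" unfolding i_def by simp
    moreover have "i + t \<le> gq (Suc j)" unfolding i_def g_Suc using t jL by linarith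
    ultimately have "cnt (i+t) = Suc j" by (rule cnt_val)
    then show "xz (i+t) = c" unfolding xz_def using jc by simp
  qed
  moreover have "M \<le> i" unfolding i_def using jL g_ge[of j] by linarith
  ultimately show "\<exists>i\<ge>M. \<forall>t\<le>L. xz (i+t) = c" by blast
qed

lemma good_g: "good {m. \<exists>j. gq j = m}"
  unfolding good_def
proof (intro allI)
  fix i k
  define W :: "nat set" where "W = {i..<i + k*k}"
  define J where "J = {j. gq j \<in> W}"
  have fJ: "finite J"
  proof (rule finite_subset[of _ "{..<i + k*k}"])
    show "J \<subseteq> {..<i + k*k}" unfolding J_def W_def using g_ge by (auto intro: le_less_trans)
  qed simp
  have eq: "{m. \<exists>j. gq j = m} \<inter> W = gq ` J" unfolding J_def by auto
  have "card J \<le> k"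
  proof (cases "J = {}")
    case True then show ?thesis by simp
  next
    case False
    define j0 where "j0 = Min J"
    have j0J: "j0 \<in> J" unfolding j0_def using fJ False by (rule Min_in)
    have "J \<subseteq> {j0..<j0+k}"
    proof
      fix j assume jJ: "j \<in> J"
      have "j0 \<le> j" unfolding j0_def using fJ jJ by (rule Min_le)
      moreover have "j < j0 + k"
      proof (rule ccontr)
        assume "\<not> j < j0 + k"
        then have "gq (j0 + k) \<le> gq j" using g_le_iff by simp
        moreover have "gq j < i + k*k" "i \<le> gq j0" using jJ j0J unfolding J_def W_def by auto
        ultimately show False using g_add[of j0 k] by linarith
      qed
      ultimately show "j \<in> {j0..<j0+k}" by simp
    qed
    then have "card J \<le> card {j0..<j0+k}" by (rule card_mono[rotated]) simp
    then show ?thesis by simp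
  qed
  moreover have "card (gq ` J) \<le> card J" by (rule card_image_le[OF fJ])
  ultimately show "card ({m. \<exists>j. gq j = m} \<inter> {i..<i + k*k}) \<le> k" using eq unfolding W_def by simp
qed

lemma xz_SS: "xz \<in> SS"
proof (rule SSI)
  fix i j assume "chg xz i" "chg xz j"
  then obtain a b where "gq a = i" "gq b = j" using chg_xz by blast
  then show "even (i + j)" using g_even by auto
next
  have "{n. chg xz n} = {m. \<exists>j. gq j = m}" using chg_xz by blast
  then show "good {n. chg xz n}" using good_g by simp
qed

lemma chg_xz_even: "chg xz m \<Longrightarrow> even m"
  using chg_xz g_even by auto

abbreviation "pF \<equiv> (\<lambda>_::nat. False)"
abbreviation "pT \<equiv> (\<lambda>_::nat. True)"

lemma closed_all:
  assumes "\<And>m. closedin sm.mtopology {y\<in>SS. P m y}"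
  shows "closedin sm.mtopology {y\<in>SS. \<forall>m. P m y}"
proof -
  have "{y\<in>SS. \<forall>m. P m y} = (\<Inter>m\<in>UNIV. {y\<in>SS. P m y})" by auto
  then show ?thesis using assms by (metis (no_types, lifting) UNIV_not_empty closedin_INT)
qed

lemma no_chg_const: "\<forall>m. \<not> chg y m \<Longrightarrow> y = (\<lambda>_. y 0)"
proof -
  assume a: "\<forall>m. \<not> chg y m"
  have "y k = y 0" for k
  proof (induction k)
    case 0 then show ?case by simp
  next
    case (Suc k) then show ?case using a unfolding chg_def by metis
  qed
  then show ?thesis by blast
qed

definition Evs where "Evs = {y\<in>SS. \<forall>m. chg y m \<longrightarrow> even m}"
definition Ods where "Ods = {y\<in>SS. \<forall>m. chg y m \<longrightarrow> odd m}"

lemma closed_Evs: "closedin sm.mtopology Evs"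
  unfolding Evs_def
proof (rule closed_all)
  fix m show "closedin sm.mtopology {y \<in> SS. chg y m \<longrightarrow> even m}"
    using closed_cyl[OF dep_chg[of m "\<lambda>b. b \<longrightarrow> even m"]] by simp
qed

lemma closed_Ods: "closedin sm.mtopology Ods"
  unfolding Ods_def
proof (rule closed_all)
  fix m show "closedin sm.mtopology {y \<in> SS. chg y m \<longrightarrow> odd m}"
    using closed_cyl[OF dep_chg[of m "\<lambda>b. b \<longrightarrow> odd m"]] by simp
qed

lemma Evs_Ods: "Evs \<inter> Ods \<subseteq> {pF, pT}"
proof
  fix y assume "y \<in> Evs \<inter> Ods"
  then have "\<forall>m. \<not> chg y m" unfolding Evs_def Ods_def by auto
  then have "y = (\<lambda>_. y 0)" by (rule no_chg_const)
  then show "y \<in> {pF, pT}" by (cases "y 0") auto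
qed

lemma F1_even: "n \<in> hitting_times sh U0 U0 \<Longrightarrow> even n"
proof -
  assume "n \<in> hitting_times sh U0 U0"
  then obtain y where y: "y \<in> U0" "(sh^^n) y \<in> U0" unfolding hitting_times_def by blast
  then have "y \<in> SS" "chg y 0" "chg y (0 + n)" unfolding U0_def by (auto simp: chg_funpow)
  then have "even (0 + (0 + n))" using SS_parity by blast
  then show ?thesis by simp
qed

lemma F2_odd: "n \<in> hitting_times sh U0 V1 \<Longrightarrow> odd n"
proof -
  assume "n \<in> hitting_times sh U0 V1"
  then obtain y where y: "y \<in> U0" "(sh^^n) y \<in> V1" unfolding hitting_times_def by blast
  then have "y \<in> SS" "chg y 0" "chg y (1 + n)" unfolding U0_def V1_def by (auto simp: chg_funpow)
  then have "even (0 + (1 + n))" using SS_parity by blast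
  then show ?thesis by simp
qed

lemma omegaNT_xz: "omega_NT SS DD sh xz = {pF, pT}"
proof
  show "{pF, pT} \<subseteq> omega_NT SS DD sh xz"
    using in_omegaNT[OF xz_SS xz_run[of False]] in_omegaNT[OF xz_SS xz_run[of True]] by blast
  have F1: "hitting_times sh U0 U0 \<in> hitting_family SS DD sh"
    unfolding hitting_family_def using opene_U0 by blast
  have F2: "hitting_times sh U0 V1 \<in> hitting_family SS DD sh"
    unfolding hitting_family_def using opene_U0 opene_V1 by blast
  have c1: "sm.mtopology closure_of ((\<lambda>i. (sh ^^ i) xz) ` hitting_times sh U0 U0) \<subseteq> Evs"
  proof (rule closure_of_minimal[OF _ closed_Evs])
    show "(\<lambda>i. (sh ^^ i) xz) ` hitting_times sh U0 U0 \<subseteq> Evs"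
    proof
      fix z assume "z \<in> (\<lambda>i. (sh ^^ i) xz) ` hitting_times sh U0 U0"
      then obtain n where n: "even n" "z = (sh^^n) xz" using F1_even by blast
      have "\<forall>m. chg z m \<longrightarrow> even m"
      proof (intro allI impI)
        fix m assume "chg z m"
        then have "even (m + n)" using n(2) chg_funpow chg_xz_even by metis
        then show "even m" using n(1) by simp
      qed
      then show "z \<in> Evs" unfolding Evs_def using funpow_sh_SS[OF xz_SS] n(2) by blast
    qed
  qed
  have c2: "sm.mtopology closure_of ((\<lambda>i. (sh ^^ i) xz) ` hitting_times sh U0 V1) \<subseteq> Ods"
  proof (rule closure_of_minimal[OF _ closed_Ods])
    show "(\<lambda>i. (sh ^^ i) xz) ` hitting_times sh U0 V1 \<subseteq> Ods"
    proof
      fix z assume "z \<in> (\<lambda>i. (sh ^^ i) xz) ` hitting_times sh U0 V1"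
      then obtain n where n: "odd n" "z = (sh^^n) xz" using F2_odd by blast
      have "\<forall>m. chg z m \<longrightarrow> odd m"
      proof (intro allI impI)
        fix m assume "chg z m"
        then have "even (m + n)" using n(2) chg_funpow chg_xz_even by metis
        then show "odd m" using n(1) by simp
      qed
      then show "z \<in> Ods" unfolding Ods_def using funpow_sh_SS[OF xz_SS] n(2) by blast
    qed
  qed
  have "omega_NT SS DD sh xz \<subseteq> sm.mtopology closure_of ((\<lambda>i. (sh ^^ i) xz) ` hitting_times sh U0 U0)
          \<inter> sm.mtopology closure_of ((\<lambda>i. (sh ^^ i) xz) ` hitting_times sh U0 V1)"
    unfolding omega_NT_def using F1 F2 by blast
  then show "omega_NT SS DD sh xz \<subseteq> {pF, pT}" using c1 c2 Evs_Ods by blast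
qed


lemma closed_U0: "closedin sm.mtopology U0"
  unfolding U0_def using closed_cyl[OF dep_chg[of 0 "\<lambda>b. b"]] by simp

lemma omegaT_ne:
  assumes b: "b \<in> SS" shows "omega_T SS DD sh b \<noteq> {pF, pT}"
proof
  assume eq: "omega_T SS DD sh b = {pF, pT}"
  define orb where "orb n = (\<lambda>k. (sh^^k) b) ` {n..}" for n
  have orbS: "orb n \<subseteq> SS" for n unfolding orb_def using funpow_sh_SS[OF b] by auto
  have om: "omega_T SS DD sh b = SS \<inter> (\<Inter>n\<in>{1..}. sm.mtopology closure_of (orb n))"
    unfolding omega_T_def orb_def by simp
  show False
  proof (cases "\<exists>M. \<forall>m\<ge>M. \<not> chg b m")
    case True
    then obtain M where M: "\<forall>m\<ge>M. \<not> chg b m" by blast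
    have bc: "b (M + d) = b M" for d
    proof (induction d)
      case 0 then show ?case by simp
    next
      case (Suc d)
      have "\<not> chg b (M + d)" using M by simp
      then have "b (Suc (M + d)) = b (M + d)" unfolding chg_def by blast
      then show ?case using Suc.IH by simp
    qed
    define Z where "Z = {y\<in>SS. y 0 = b M}"
    have dZ: "dep 1 (\<lambda>y. y 0 = b M)" unfolding dep_def agree_def by auto
    have cZ: "closedin sm.mtopology Z" unfolding Z_def by (rule closed_cyl[OF dZ])
    have "orb (Suc M) \<subseteq> Z"
    proof
      fix z assume "z \<in> orb (Suc M)"
      then obtain k where k: "Suc M \<le> k" "z = (sh^^k) b" unfolding orb_def by auto
      have "z 0 = b k" using k(2) by (simp add: funpow_sh)
      also have "\<dots> = b (M + (k - M))" using k(1) by simp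
      also have "\<dots> = b M" by (rule bc)
      finally show "z \<in> Z" unfolding Z_def using k(2) funpow_sh_SS[OF b] by blast
    qed
    then have "sm.mtopology closure_of (orb (Suc M)) \<subseteq> Z" by (rule closure_of_minimal[OF _ cZ])
    moreover have "omega_T SS DD sh b \<subseteq> sm.mtopology closure_of (orb (Suc M))"
      unfolding om by auto
    ultimately have "pF \<in> Z" "pT \<in> Z" using eq by auto
    then show False unfolding Z_def by simp
  next
    case False
    then have inf: "\<forall>M. \<exists>m. M \<le> m \<and> chg b m"
      by (simp only: not_ex not_all not_imp not_not) simp
    define C where "C n = sm.mtopology closure_of (orb (Suc n)) \<inter> U0" for n
    have cC: "closedin sm.mtopology (C n)" for n
      unfolding C_def by (rule closedin_Int[OF closedin_closure_of closed_U0])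
    have neC: "C n \<noteq> {}" for n
    proof -
      obtain m where m: "Suc n \<le> m" "chg b m" using inf by blast
      have "(sh^^m) b \<in> orb (Suc n)" unfolding orb_def using m(1) by simp
      then have "(sh^^m) b \<in> sm.mtopology closure_of (orb (Suc n))"
        using closure_of_subset[of "orb (Suc n)" sm.mtopology] orbS by auto
      moreover have "(sh^^m) b \<in> U0" unfolding U0_def
        using funpow_sh_SS[OF b] m(2) by (simp add: chg_funpow)
      ultimately show ?thesis unfolding C_def by blast
    qed
    have dC: "decseq C"
    proof (rule decseq_SucI)
      fix n
      have "orb (Suc (Suc n)) \<subseteq> orb (Suc n)" unfolding orb_def by auto
      then have "sm.mtopology closure_of (orb (Suc (Suc n))) \<subseteq> sm.mtopology closure_of (orb (Suc n))"
        by (rule closure_of_mono)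
      then show "C (Suc n) \<subseteq> C n" unfolding C_def by blast
    qed
    have "\<Inter>(range C) \<noteq> {}"
      using compact_SS unfolding sm.compact_space_nest using cC neC dC by blast
    then obtain z where z: "z \<in> \<Inter>(range C)" by blast
    have zU: "z \<in> U0" using z unfolding C_def by blast
    then have zS: "z \<in> SS" and cz: "chg z 0" unfolding U0_def by auto
    have "z \<in> omega_T SS DD sh b"
      unfolding om
    proof (intro IntI INT_I zS)
      fix n :: nat assume "n \<in> {1..}"
      then have "Suc (n - 1) = n" by simp
      moreover have "z \<in> C (n - 1)" using z by blast
      ultimately have "z \<in> sm.mtopology closure_of (orb (Suc (n - 1)))" unfolding C_def by blast
      then show "z \<in> sm.mtopology closure_of (orb n)" using \<open>Suc (n - 1) = n\<close> by simp
    qed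
    then have "z = pF \<or> z = pT" using eq by blast
    then show False using cz chg_const by metis
  qed
qed

lemma main_SS: "\<exists>x0\<in>SS. dyn_sys SS DD sh \<and> \<not> proximal SS DD sh \<and> \<not> totally_transitive SS DD sh \<and>
   transitive_compact SS DD sh \<and> (\<forall>b\<in>SS. omega_NT SS DD sh x0 \<noteq> omega_T SS DD sh b)"
proof (intro bexI[of _ xz] conjI ballI)
  show "xz \<in> SS" by (rule xz_SS)
  show "dyn_sys SS DD sh" by (rule dyn_SS)
  show "\<not> proximal SS DD sh" by (rule nonprox_SS)
  show "\<not> totally_transitive SS DD sh" by (rule nott_SS)
  show "transitive_compact SS DD sh" by (rule tc_SS)
  fix b assume "b \<in> SS"
  then show "omega_NT SS DD sh xz \<noteq> omega_T SS DD sh b"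
    using omegaNT_xz omegaT_ne by metis
qed


locale conjug =
  fixes e :: "'a \<Rightarrow> 'b" and g :: "'b \<Rightarrow> 'a"
  assumes ge [simp]: "\<And>a. g (e a) = a" and eg [simp]: "\<And>r. e (g r) = r"
begin

lemma conj_pow:
  assumes "\<And>r. F r = e (G (g r))"
  shows "(F ^^ n) r = e ((G ^^ n) (g r))"
proof (induction n)
  case 0 then show ?case by simp
next
  case (Suc n) then show ?case using assms by simp
qed

lemma inj_e: "inj e" by (metis ge injI)

lemma e_mem_iff: "e z \<in> V \<longleftrightarrow> z \<in> g ` V"
  by (metis eg ge image_iff)

lemma ht_eq:
  assumes A: "\<And>r. F r = e (G (g r))"
  shows "hitting_times F U V = hitting_times G (g ` U) (g ` V)"
proof (intro set_eqI iffI)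
  fix n assume "n \<in> hitting_times F U V"
  then obtain r where r: "r \<in> U" "(F ^^ n) r \<in> V" unfolding hitting_times_def by blast
  then have "e ((G ^^ n) (g r)) \<in> V" using conj_pow[where F=F and G=G, OF A] by simp
  then have "(G ^^ n) (g r) \<in> g ` V" using e_mem_iff by blast
  then show "n \<in> hitting_times G (g ` U) (g ` V)" unfolding hitting_times_def using r(1) by blast
next
  fix n assume "n \<in> hitting_times G (g ` U) (g ` V)"
  then obtain r where r: "r \<in> U" "(G ^^ n) (g r) \<in> g ` V" unfolding hitting_times_def by blast
  then have "e ((G ^^ n) (g r)) \<in> V" using e_mem_iff by blast
  then have "(F ^^ n) r \<in> V" using conj_pow[where F=F and G=G, OF A] by simp
  then show "n \<in> hitting_times F U V" unfolding hitting_times_def using r(1) by blast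
qed

end

lemma transfer:
  fixes S :: "'a set" and D :: "'a \<Rightarrow> 'a \<Rightarrow> real" and f :: "'a \<Rightarrow> 'a"
    and e :: "'a \<Rightarrow> real" and g :: "real \<Rightarrow> 'a"
  assumes ge: "\<And>a. g (e a) = a" and eg: "\<And>r. e (g r) = r"
    and x0: "x0 \<in> S" and dyn: "dyn_sys S D f" and np: "\<not> proximal S D f"
    and ntt: "\<not> totally_transitive S D f" and tc: "transitive_compact S D f"
    and om: "\<forall>b\<in>S. omega_NT S D f x0 \<noteq> omega_T S D f b"
  shows "\<exists>(X :: real set) (d :: real \<Rightarrow> real \<Rightarrow> real) (T :: real \<Rightarrow> real) (x0 :: real).
           dyn_sys X d T \<and> \<not> proximal X d T \<and> \<not> totally_transitive X d T \<and>
           transitive_compact X d T \<and> x0 \<in> X \<and> (\<forall>x\<in>X. omega_NT X d T x0 \<noteq> omega_T X d T x)"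
proof -
  interpret cj: conjug e g by unfold_locales (auto simp: ge eg)
  define X where "X = e ` S"
  define d where "d r s = D (g r) (g s)" for r s
  define T where "T r = e (f (g r))" for r
  have MS: "Metric_space S D" using dyn unfolding dyn_sys_def by blast
  interpret ms: Metric_space S D by (rule MS)
  have MX: "Metric_space X d"
  proof
    show "0 \<le> d x y" for x y unfolding d_def by simp
    show "d x y = d y x" for x y unfolding d_def by (simp add: ms.commute)
    show "d x y = 0 \<longleftrightarrow> x = y" if "x \<in> X" "y \<in> X" for x y
      using that unfolding d_def X_def by (auto simp: ge)
    show "d x z \<le> d x y + d y z" if "x \<in> X" "y \<in> X" "z \<in> X" for x y z
      using that unfolding d_def X_def by (auto simp: ge intro: ms.triangle)
  qed
  interpret mx: Metric_space X d by (rule MX)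
  interpret m12: Metric_space12 S D X d by unfold_locales
  interpret m21: Metric_space12 X d S D by unfold_locales
  have he: "homeomorphic_map ms.mtopology mx.mtopology e"
    by (rule m12.isometry_imp_homeomorphic_map) (auto simp: X_def d_def ge)
  have hg: "homeomorphic_map mx.mtopology ms.mtopology g"
    by (rule m21.isometry_imp_homeomorphic_map) (auto simp: X_def d_def ge image_image)
  have ce: "continuous_map ms.mtopology mx.mtopology e" using he homeomorphic_imp_continuous_map by blast
  have cg: "continuous_map mx.mtopology ms.mtopology g" using hg homeomorphic_imp_continuous_map by blast
  have Tc: "\<And>r. T r = e (f (g r))" unfolding T_def by simp
  have fS: "f ` S = S" using dyn unfolding dyn_sys_def by blast
  have fnS: "(f ^^ n) a \<in> S" if "a \<in> S" for n a
    using that by (induction n) (use fS in auto)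
  have openX: "openin mx.mtopology (e ` U) \<longleftrightarrow> openin ms.mtopology U" if "U \<subseteq> S" for U
    using homeomorphic_map_openness[OF he] that by simp
  have openS: "openin ms.mtopology (g ` U) \<longleftrightarrow> openin mx.mtopology U" if "U \<subseteq> X" for U
    using homeomorphic_map_openness[OF hg] that by simp
  have opX: "opene X d (e ` U)" if "opene S D U" for U
    using that openX unfolding opene_def by (auto dest: ms.openin_mtopology[THEN iffD1])
  have opS: "opene S D (g ` U)" if "opene X d U" for U
    using that openS unfolding opene_def by (auto dest: mx.openin_mtopology[THEN iffD1])
  have fam: "hitting_family X d T = hitting_family S D f"
  proof (intro set_eqI iffI)
    fix F assume "F \<in> hitting_family X d T"
    then obtain U V where UV: "opene X d U" "opene X d V" "hitting_times T U V \<subseteq> F"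
      unfolding hitting_family_def by blast
    then have "hitting_times f (g ` U) (g ` V) \<subseteq> F" using cj.ht_eq[where F=T and G=f, OF Tc] by simp
    then show "F \<in> hitting_family S D f" unfolding hitting_family_def using opS UV by blast
  next
    fix F assume "F \<in> hitting_family S D f"
    then obtain U V where UV: "opene S D U" "opene S D V" "hitting_times f U V \<subseteq> F"
      unfolding hitting_family_def by blast
    have "hitting_times T (e ` U) (e ` V) = hitting_times f U V"
      using cj.ht_eq[where F=T and G=f, OF Tc] by (simp add: image_image)
    then have "hitting_times T (e ` U) (e ` V) \<subseteq> F" using UV(3) by simp
    moreover have "opene X d (e ` U)" "opene X d (e ` V)" using opX UV by auto
    ultimately show "F \<in> hitting_family X d T" unfolding hitting_family_def by blast
  qed
  have clos: "mx.mtopology closure_of ((\<lambda>i. (T ^^ i) (e a)) ` F) = e ` (ms.mtopology closure_of ((\<lambda>i. (f ^^ i) a) ` F))"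
    if "a \<in> S" for a F
  proof -
    have "(\<lambda>i. (T ^^ i) (e a)) ` F = e ` ((\<lambda>i. (f ^^ i) a) ` F)"
      using cj.conj_pow[where F=T and G=f, OF Tc] by (auto simp: image_image)
    moreover have "(\<lambda>i. (f ^^ i) a) ` F \<subseteq> topspace ms.mtopology" using fnS that by auto
    ultimately show ?thesis using homeomorphic_map_closure_of[OF he] by simp
  qed
  have bije: "bij e" using cj.inj_e by (metis bijI' cj.eg cj.ge)
  have omNT: "omega_NT X d T (e a) = e ` omega_NT S D f a" if "a \<in> S" for a
  proof -
    have "omega_NT X d T (e a) = X \<inter> (\<Inter>F\<in>hitting_family S D f. e ` (ms.mtopology closure_of ((\<lambda>i. (f ^^ i) a) ` F)))"
      unfolding omega_NT_def fam using clos[OF that] by simp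
    also have "\<dots> = e ` S \<inter> (\<Inter>F\<in>hitting_family S D f. e ` (ms.mtopology closure_of ((\<lambda>i. (f ^^ i) a) ` F)))"
      by (simp only: X_def)
    also have "\<dots> = e ` (S \<inter> (\<Inter>F\<in>hitting_family S D f. ms.mtopology closure_of ((\<lambda>i. (f ^^ i) a) ` F)))"
      by (simp add: bij_image_INT[OF bije] image_Int[OF cj.inj_e])
    finally show ?thesis unfolding omega_NT_def .
  qed
  have omT: "omega_T X d T (e a) = e ` omega_T S D f a" if "a \<in> S" for a
  proof -
    have "omega_T X d T (e a) = X \<inter> (\<Inter>n\<in>{1..}. e ` (ms.mtopology closure_of ((\<lambda>k. (f ^^ k) a) ` {n..})))"
      unfolding omega_T_def using clos[OF that] by simp
    also have "\<dots> = e ` S \<inter> (\<Inter>n\<in>{1..}. e ` (ms.mtopology closure_of ((\<lambda>k. (f ^^ k) a) ` {n..})))"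
      by (simp only: X_def)
    also have "\<dots> = e ` (S \<inter> (\<Inter>n\<in>{1..}. ms.mtopology closure_of ((\<lambda>k. (f ^^ k) a) ` {n..})))"
      by (simp add: bij_image_INT[OF bije] image_Int[OF cj.inj_e])
    finally show ?thesis unfolding omega_T_def .
  qed
  have dynX: "dyn_sys X d T"
    unfolding dyn_sys_def
  proof (intro conjI)
    show "Metric_space X d" by (rule MX)
    have "compactin ms.mtopology S" using dyn unfolding dyn_sys_def compact_space_def by simp
    then have "compactin mx.mtopology (e ` S)" by (rule image_compactin[OF _ ce])
    then have "compactin mx.mtopology X" unfolding X_def .
    then show "compact_space mx.mtopology" unfolding compact_space_def mx.topspace_mtopology .
    obtain a b where "a \<in> S" "b \<in> S" "a \<noteq> b" using dyn unfolding dyn_sys_def by blast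
    then show "\<exists>x\<in>X. \<exists>y\<in>X. x \<noteq> y" unfolding X_def by (metis cj.ge imageI)
    show "\<forall>x\<in>X. \<not> openin mx.mtopology {x}"
    proof
      fix x assume "x \<in> X"
      then obtain a where a: "a \<in> S" "x = e a" unfolding X_def by blast
      have "\<not> openin ms.mtopology {a}" using dyn a(1) unfolding dyn_sys_def by blast
      then show "\<not> openin mx.mtopology {x}" using openX[of "{a}"] a by simp
    qed
    have cf: "continuous_map ms.mtopology ms.mtopology f" using dyn unfolding dyn_sys_def by blast
    have "T = e \<circ> f \<circ> g" unfolding T_def by auto
    then show "continuous_map mx.mtopology mx.mtopology T"
      using continuous_map_compose[OF cg continuous_map_compose[OF cf ce]] by simp
    have "T ` X = e ` f ` S" unfolding X_def T_def by (simp add: image_image)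
    then show "T ` X = X" using fS unfolding X_def by simp
  qed
  have npX: "\<not> proximal X d T"
  proof
    assume p: "proximal X d T"
    have "proximal S D f" unfolding proximal_def
    proof (intro ballI)
      fix a b assume "a \<in> S" "b \<in> S"
      then have "e a \<in> X" "e b \<in> X" unfolding X_def by auto
      then have "liminf (\<lambda>n. ereal (d ((T ^^ n) (e a)) ((T ^^ n) (e b)))) = 0"
        using p unfolding proximal_def by blast
      then show "liminf (\<lambda>n. ereal (D ((f ^^ n) a) ((f ^^ n) b))) = 0"
        unfolding d_def cj.conj_pow[where F=T and G=f, OF Tc] by simp
    qed
    then show False using np by simp
  qed
  have nttX: "\<not> totally_transitive X d T"
  proof
    assume t: "totally_transitive X d T"
    have "totally_transitive S D f" unfolding totally_transitive_def transitive_sys_def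
    proof (intro allI impI)
      fix k :: nat and U V assume k: "1 \<le> k" and UV: "opene S D U \<and> opene S D V"
      have Tk: "(T ^^ k) r = e ((f ^^ k) (g r))" for r by (rule cj.conj_pow[where F=T and G=f, OF Tc])
      have "hitting_times (T ^^ k) (e ` U) (e ` V) \<noteq> {}"
        using t k opX UV unfolding totally_transitive_def transitive_sys_def by blast
      then show "hitting_times (f ^^ k) U V \<noteq> {}"
        using cj.ht_eq[where F="T^^k" and G="f^^k", OF Tk] by (simp add: image_image)
    qed
    then show False using ntt by simp
  qed
  have tcX: "transitive_compact X d T"
    unfolding transitive_compact_def
  proof
    fix x assume "x \<in> X"
    then obtain a where a: "a \<in> S" "x = e a" unfolding X_def by blast
    then have "omega_NT S D f a \<noteq> {}" using tc unfolding transitive_compact_def by blast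
    then show "omega_NT X d T x \<noteq> {}" using omNT[OF a(1)] a(2) by simp
  qed
  have omX: "\<forall>x\<in>X. omega_NT X d T (e x0) \<noteq> omega_T X d T x"
  proof
    fix x assume "x \<in> X"
    then obtain b where b: "b \<in> S" "x = e b" unfolding X_def by blast
    have "omega_NT S D f x0 \<noteq> omega_T S D f b" using om b(1) by blast
    then show "omega_NT X d T (e x0) \<noteq> omega_T X d T x"
      using omNT[OF x0] omT[OF b(1)] b(2) cj.inj_e by (simp add: inj_image_eq_iff)
  qed
  have "e x0 \<in> X" unfolding X_def using x0 by blast
  then show ?thesis using dynX npX nttX tcX omX by blast
qed


theorem corollary6p5:
  shows "\<exists>(X :: real set) (d :: real \<Rightarrow> real \<Rightarrow> real) (T :: real \<Rightarrow> real) (x0 :: real).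
           dyn_sys X d T \<and>
           \<not> proximal X d T \<and>
           \<not> totally_transitive X d T \<and>
           transitive_compact X d T \<and>
           x0 \<in> X \<and>
           (\<forall>x\<in>X. omega_NT X d T x0 \<noteq> omega_T X d T x)"
proof -
  obtain \<phi> :: "nat set \<Rightarrow> real" where phi: "bij \<phi>"
    using nat_sets_eqpoll_reals unfolding eqpoll_def by blast
  define e where "e x = \<phi> {n. x n}" for x :: "nat \<Rightarrow> bool"
  define h where "h r = (\<lambda>n. n \<in> inv \<phi> r)" for r
  have he: "h (e x) = x" for x
    unfolding e_def h_def using bij_is_inj[OF phi] by (simp add: inv_f_f)
  have eh: "e (h r) = r" for r
    unfolding e_def h_def using bij_is_surj[OF phi] by (simp add: surj_f_inv_f)
  obtain x0 where x0: "x0 \<in> SS" and props: "dyn_sys SS DD sh" "\<not> proximal SS DD sh"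
    "\<not> totally_transitive SS DD sh" "transitive_compact SS DD sh"
    "\<forall>b\<in>SS. omega_NT SS DD sh x0 \<noteq> omega_T SS DD sh b"
    using main_SS by blast
  show ?thesis by (rule transfer[OF he eh x0 props])
qed

end
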